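(* Let $X$ be a topological space with a regular $G_\delta$-diagonal and let $E$ be a $B_1$-retract of $X$. Then $E$ is a $G_\delta$-set in $X$.
   Context: A function $f:X\to Y$ between topological spaces is a Baire-one function if it is the pointwise limit of a sequence of continuous functions $f_n:X\to Y$. A subset $E$ of $X$ (with the subspace topology) is a $B_1$-retract of $X$ if there exists a Baire-one function $r:X\to E$ with $r(x)=x$ for all $x\in E$. A subset $A$ of a topological space $Z$ is a regular $G_\delta$-set if there is a sequence $(G_n)_{n\ge1}$ of open sets in $Z$ with $A=\bigcap_n G_n=\bigcap_n \overline{G_n}$. $X$ has a regular $G_\delta$-diagonal if $\Delta=\{(x,x):x\in X\}$ is a regular $G_\delta$-set in $X\times X$. *)

theory Defs
  imports "HOL-Analysis.Analysis"
begin

definition baire_one :: "'a topology \<Rightarrow> 'b topology \<Rightarrow> ('a \<Rightarrow> 'b) \<Rightarrow> bool" where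
  "baire_one X Y f \<longleftrightarrow>
     (\<exists>fs :: nat \<Rightarrow> 'a \<Rightarrow> 'b. (\<forall>n. continuous_map X Y (fs n)) \<and>
        (\<forall>x\<in>topspace X. limitin Y (\<lambda>n. fs n x) (f x) sequentially))"

definition b1_retract :: "'a topology \<Rightarrow> 'a set \<Rightarrow> bool" where
  "b1_retract X E \<longleftrightarrow> E \<subseteq> topspace X \<and>
     (\<exists>r. baire_one X (subtopology X E) r \<and> (\<forall>x\<in>E. r x = x))"

definition regular_gdelta_in :: "'a topology \<Rightarrow> 'a set \<Rightarrow> bool" where
  "regular_gdelta_in Z A \<longleftrightarrow>
     (\<exists>G :: nat \<Rightarrow> 'a set. (\<forall>n. openin Z (G n)) \<and>
        A = (\<Inter>n. G n) \<and> A = (\<Inter>n. Z closure_of (G n)))"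

definition regular_gdelta_diagonal :: "'a topology \<Rightarrow> bool" where
  "regular_gdelta_diagonal X \<longleftrightarrow>
     regular_gdelta_in (prod_topology X X) {(x, x) | x. x \<in> topspace X}"

end

theory Submission
  imports Defs
begin

theorem proposition2p2:
  fixes X :: "'a topology" and E :: "'a set"
  assumes "regular_gdelta_diagonal X"
    and "b1_retract X E"
  shows "gdelta_in X E"
proof -
  have "\<exists>G :: nat \<Rightarrow> ('a\<times>'a) set. (\<forall>n. openin (prod_topology X X) (G n)) \<and>
        {(x, x) | x. x \<in> topspace X} = (\<Inter>n. G n) \<and>
        {(x, x) | x. x \<in> topspace X} = (\<Inter>n. (prod_topology X X) closure_of (G n))"
    using assms(1) unfolding regular_gdelta_diagonal_def regular_gdelta_in_def .
  then obtain G :: "nat \<Rightarrow> ('a\<times>'a) set" where GG: "(\<forall>n. openin (prod_topology X X) (G n)) \<and>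
        {(x, x) | x. x \<in> topspace X} = (\<Inter>n. G n) \<and>
        {(x, x) | x. x \<in> topspace X} = (\<Inter>n. (prod_topology X X) closure_of (G n))" by (rule exE)
  have Gopen: "\<And>n. openin (prod_topology X X) (G n)" using GG by (elim conjE allE)
  have D1: "{(x, x) | x. x \<in> topspace X} = (\<Inter>n. G n)" using GG by (elim conjE)
  have D2: "{(x, x) | x. x \<in> topspace X} = (\<Inter>n. (prod_topology X X) closure_of (G n))"
    using GG by (elim conjE)
  have ET: "E \<subseteq> topspace X" using assms(2) unfolding b1_retract_def by blast
  have "\<exists>r. (\<exists>fs :: nat \<Rightarrow> 'a \<Rightarrow> 'a. (\<forall>n. continuous_map X (subtopology X E) (fs n)) \<and>
        (\<forall>x\<in>topspace X. limitin (subtopology X E) (\<lambda>n. fs n x) (r x) sequentially))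
        \<and> (\<forall>x\<in>E. r x = x)"
    using assms(2) unfolding b1_retract_def baire_one_def by (rule conjunct2)
  then obtain r where R: "(\<exists>fs :: nat \<Rightarrow> 'a \<Rightarrow> 'a. (\<forall>n. continuous_map X (subtopology X E) (fs n)) \<and>
        (\<forall>x\<in>topspace X. limitin (subtopology X E) (\<lambda>n. fs n x) (r x) sequentially))
        \<and> (\<forall>x\<in>E. r x = x)" by (rule exE)
  have rid: "\<And>x. x \<in> E \<Longrightarrow> r x = x" using R by (simp only: Ball_def)
  from R have "\<exists>fs :: nat \<Rightarrow> 'a \<Rightarrow> 'a. (\<forall>n. continuous_map X (subtopology X E) (fs n)) \<and>
        (\<forall>x\<in>topspace X. limitin (subtopology X E) (\<lambda>n. fs n x) (r x) sequentially)" by (rule conjunct1)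
  then obtain fs :: "nat \<Rightarrow> 'a \<Rightarrow> 'a" where FS: "(\<forall>n. continuous_map X (subtopology X E) (fs n)) \<and>
        (\<forall>x\<in>topspace X. limitin (subtopology X E) (\<lambda>n. fs n x) (r x) sequentially)" by (rule exE)
  have fc: "\<And>n. continuous_map X (subtopology X E) (fs n)" using FS by (rule conjunct1[THEN spec])
  have lim: "\<And>x. x \<in> topspace X \<Longrightarrow> limitin (subtopology X E) (\<lambda>n. fs n x) (r x) sequentially"
    using FS by (simp only: Ball_def)
  have fcX: "continuous_map X X (fs n)" for n
    using fc[of n] by (rule continuous_map_into_fulltopology)
  have LL: "r x \<in> E \<and> eventually (\<lambda>n. fs n x \<in> E) sequentially \<and> limitin X (\<lambda>n. fs n x) (r x) sequentially"
    if "x \<in> topspace X" for x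
    using limitin_subtopology[THEN iffD1, OF lim[OF that]] .
  have limX: "limitin X (\<lambda>n. fs n x) (r x) sequentially"
    if "x \<in> topspace X" for x
    using LL[OF that] by (elim conjE)
  have rE: "r x \<in> E"
    if "x \<in> topspace X" for x
    using LL[OF that] by (elim conjE)
  have plim: "limitin (prod_topology X X) (\<lambda>n. (x, fs n x)) (x, r x) sequentially"
    if x: "x \<in> topspace X" for x
  proof -
    have e1: "fst \<circ> (\<lambda>n. (x, fs n x)) = (\<lambda>n. x)" and e2: "snd \<circ> (\<lambda>n. (x, fs n x)) = (\<lambda>n. fs n x)"
      by (auto simp: fun_eq_iff)
    show ?thesis unfolding limitin_pairwise e1 e2 fst_conv snd_conv limitin_const_iff
      using limX[OF x] x by simp
  qed
  define U where "U = (\<lambda>(m,k). \<Union>n\<in>{k..}. {x \<in> topspace X. (x, fs n x) \<in> G m})"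
  have Uopen: "openin X (U p)" for p
  proof -
    obtain m k where p: "p = (m,k)" by fastforce
    have "openin X {x \<in> topspace X. (x, fs n x) \<in> G m}" for n
      using openin_continuous_map_preimage[OF continuous_map_pairedI[OF continuous_map_id fcX] Gopen]
      by simp
    then show ?thesis unfolding U_def p by (auto intro!: openin_Union)
  qed
  have "E = \<Inter> (range U)"
  proof (intro equalityI subsetI)
    fix x assume xE: "x \<in> E"
    then have x: "x \<in> topspace X" using ET by blast
    show "x \<in> \<Inter> (range U)"
    proof (rule InterI)
      fix S assume "S \<in> range U"
      then obtain m k where S: "S = U (m,k)" by auto
      have "(x,x) \<in> G m" using D1 x by blast
      moreover have "limitin (prod_topology X X) (\<lambda>n. (x, fs n x)) (x, x) sequentially"
        using plim[OF x] rid[OF xE] by simp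
      ultimately have "eventually (\<lambda>n. (x, fs n x) \<in> G m) sequentially"
        using Gopen[of m] unfolding limitin_def by blast
      then obtain N where "\<And>n. n \<ge> N \<Longrightarrow> (x, fs n x) \<in> G m"
        unfolding eventually_sequentially by blast
      then have "(x, fs (max N k) x) \<in> G m" by simp
      then show "x \<in> S" unfolding S U_def using x
        by (auto intro!: bexI[of _ "max N k"])
    qed
  next
    fix x assume xU: "x \<in> \<Inter> (range U)"
    then have x: "x \<in> topspace X" unfolding U_def by auto
    show "x \<in> E"
    proof (rule ccontr)
      assume "x \<notin> E"
      then have "r x \<noteq> x" using rE[OF x] by auto
      then have "(x, r x) \<notin> {(x, x) | x. x \<in> topspace X}" by auto
      then obtain m where m: "(x, r x) \<notin> (prod_topology X X) closure_of (G m)"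
        using D2 by blast
      have rx: "(x, r x) \<in> topspace (prod_topology X X)"
        using x rE[OF x] ET by auto
      have OO: "openin (prod_topology X X) (topspace (prod_topology X X) - (prod_topology X X) closure_of (G m))"
        by (rule openin_diff[OF openin_topspace closedin_closure_of])
      have "eventually (\<lambda>n. (x, fs n x) \<in> topspace (prod_topology X X) - (prod_topology X X) closure_of (G m)) sequentially"
      proof -
        have "(x, r x) \<in> topspace (prod_topology X X) - (prod_topology X X) closure_of (G m)"
          using m rx by (rule DiffI[rotated])
        then show ?thesis using plim[OF x] OO unfolding limitin_def by (elim conjE allE impE) (rule conjI)
      qed
      then obtain N where N: "\<And>n. n \<ge> N \<Longrightarrow> (x, fs n x) \<notin> (prod_topology X X) closure_of (G m)"
        unfolding eventually_sequentially by (elim exE) (auto simp only: DiffE)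
      from xU have "x \<in> U (m,N)" by (rule InterD) (rule rangeI)
      then obtain n where n: "n \<ge> N" "(x, fs n x) \<in> G m" unfolding U_def by auto
      have "G m \<subseteq> (prod_topology X X) closure_of (G m)"
        by (rule closure_of_subset[OF openin_subset[OF Gopen]])
      then show False using N[OF n(1)] n(2) by (auto simp only: subset_iff)
    qed
  qed
  moreover have "gdelta_in X (\<Inter> (range U))"
    by (rule gdelta_in_Inter) (auto intro: open_imp_gdelta_in Uopen)
  ultimately show ?thesis by simp
qed

end
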